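(* In every dynamic network congestion game, every blind Nash equilibrium is a Nash equilibrium (i.e., no player can decrease their cost by deviating to an arbitrary, not necessarily blind, strategy).
   Context: Let $\mathcal F$ be the set of non-decreasing piecewise-affine functions $\mathbb N\to\mathbb N$ with finitely many pieces. An arena is $\mathcal A=(V,E,\mathsf{src},\mathsf{tgt})$ with $V$ finite, $E$ a partial function $V\times V\to\mathcal F$ (edge $e=(v,\ell_e,v')$ has cost function $\ell_e$); $\mathsf{tgt}$ has only a self-loop of constant cost $0$ and is reachable from every state. A dynamic NCG $(\mathcal A,n)$ has players $[n]=\{1,\dots,n\}$, all starting in $\mathsf{src}$. In each step each player $i$ simultaneously picks an edge $e_i$ leaving their current state, moves along it, and pays $\ell_{e_i}(u_i)$, $u_i$ being the number of players choosing edge $e_i$ in that step. A strategy for player $i$ maps each finite history (sequence of configurations $[n]\to V$ and steps from the initial configuration) to an edge leaving player $i$'s current state; $\mathrm{cost}_i(\sigma)$ is player $i$'s total payment along the outcome of profile $\sigma$ until reaching $\mathsf{tgt}$ ($+\infty$ if never). $\sigma$ is a Nash equilibrium if for every $k$, $\mathrm{cost}_k(\sigma)=\inf_{\sigma'_k}\mathrm{cost}_k(\langle\sigma_{-k},\sigma'_k\rangle)$ over all strategies $\sigma'_k$, where $\langle\sigma_{-k},\sigma'_k\rangle$ replaces $\sigma_k$ by $\sigma'_k$. A strategy is blind if it depends only on the sequence of states visited by the player itself (it follows a fixed path in $\mathcal A$). A blind Nash equilibrium is a profile of blind strategies in which no player can decrease their cost by switching to another blind strategy. *)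

theory Defs
  imports Main "HOL-Library.Extended_Nat"
begin

text \<open>Pieces are the intervals [t j, t (j+1)) for j < k-1 and [t (k-1), infinity);
  on piece j the function equals x \<mapsto> a j * x + b j.\<close>
definition piecewise_affine :: "(nat \<Rightarrow> nat) \<Rightarrow> bool" where
  "piecewise_affine f \<longleftrightarrow>
     (\<exists>(k::nat) (t::nat \<Rightarrow> nat) (a::nat \<Rightarrow> real) (b::nat \<Rightarrow> real).
        k \<ge> 1 \<and> t 0 = 0 \<and> (\<forall>j. j + 1 < k \<longrightarrow> t j < t (j + 1)) \<and>
        (\<forall>j x. j < k \<and> t j \<le> x \<and> (j + 1 < k \<longrightarrow> x < t (j + 1))
               \<longrightarrow> real (f x) = a j * real x + b j))"

definition cost_fun :: "(nat \<Rightarrow> nat) \<Rightarrow> bool" where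
  "cost_fun f \<longleftrightarrow> mono f \<and> piecewise_affine f"

text \<open>E v v' = Some l means there is an edge (v, l, v'). Edges are identified with pairs of states.\<close>
definition arena :: "'v set \<Rightarrow> ('v \<Rightarrow> 'v \<Rightarrow> (nat \<Rightarrow> nat) option) \<Rightarrow> 'v \<Rightarrow> 'v \<Rightarrow> bool" where
  "arena V E src tgt \<longleftrightarrow>
     finite V \<and> src \<in> V \<and> tgt \<in> V \<and>
     (\<forall>v v' l. E v v' = Some l \<longrightarrow> v \<in> V \<and> v' \<in> V \<and> cost_fun l) \<and>
     E tgt tgt = Some (\<lambda>_. 0) \<and> (\<forall>v. v \<noteq> tgt \<longrightarrow> E tgt v = None) \<and>
     (\<forall>v\<in>V. (v, tgt) \<in> {(x, y). E x y \<noteq> None}\<^sup>*)"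

definition is_edge :: "('v \<Rightarrow> 'v \<Rightarrow> (nat \<Rightarrow> nat) option) \<Rightarrow> 'v \<times> 'v \<Rightarrow> bool" where
  "is_edge E e \<longleftrightarrow> E (fst e) (snd e) \<noteq> None"

definition edge_cost :: "('v \<Rightarrow> 'v \<Rightarrow> (nat \<Rightarrow> nat) option) \<Rightarrow> 'v \<times> 'v \<Rightarrow> nat \<Rightarrow> nat" where
  "edge_cost E e = the (E (fst e) (snd e))"

text \<open>Players are 1..n. A step assigns to each player the edge it takes.
  A history is the list of steps taken so far from the initial configuration
  (all players in src); the configurations are determined by the steps.\<close>
type_synonym 'v step = "nat \<Rightarrow> 'v \<times> 'v"
type_synonym 'v history = "'v step list"
type_synonym 'v strategy = "'v history \<Rightarrow> 'v \<times> 'v"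

definition cur :: "'v \<Rightarrow> 'v history \<Rightarrow> nat \<Rightarrow> 'v" where
  "cur src h i = (if h = [] then src else snd (last h i))"

definition strategy :: "('v \<Rightarrow> 'v \<Rightarrow> (nat \<Rightarrow> nat) option) \<Rightarrow> 'v \<Rightarrow> nat \<Rightarrow> 'v strategy \<Rightarrow> bool" where
  "strategy E src i s \<longleftrightarrow> (\<forall>h. is_edge E (s h) \<and> fst (s h) = cur src h i)"

definition visited :: "'v \<Rightarrow> 'v history \<Rightarrow> nat \<Rightarrow> 'v list" where
  "visited src h i = src # map (\<lambda>st. snd (st i)) h"

definition blind :: "'v \<Rightarrow> nat \<Rightarrow> 'v strategy \<Rightarrow> bool" where
  "blind src i s \<longleftrightarrow> (\<forall>h h'. visited src h i = visited src h' i \<longrightarrow> s h = s h')"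

definition blind_strategy :: "('v \<Rightarrow> 'v \<Rightarrow> (nat \<Rightarrow> nat) option) \<Rightarrow> 'v \<Rightarrow> nat \<Rightarrow> 'v strategy \<Rightarrow> bool" where
  "blind_strategy E src i s \<longleftrightarrow> strategy E src i s \<and> blind src i s"

primrec out_hist :: "(nat \<Rightarrow> 'v strategy) \<Rightarrow> nat \<Rightarrow> 'v history" where
  "out_hist \<sigma> 0 = []"
| "out_hist \<sigma> (Suc k) = out_hist \<sigma> k @ [(\<lambda>i. \<sigma> i (out_hist \<sigma> k))]"

definition out_step :: "(nat \<Rightarrow> 'v strategy) \<Rightarrow> nat \<Rightarrow> 'v step" where
  "out_step \<sigma> k = (\<lambda>i. \<sigma> i (out_hist \<sigma> k))"

definition payment :: "('v \<Rightarrow> 'v \<Rightarrow> (nat \<Rightarrow> nat) option) \<Rightarrow> nat \<Rightarrow> (nat \<Rightarrow> 'v strategy) \<Rightarrow> nat \<Rightarrow> nat \<Rightarrow> nat" where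
  "payment E n \<sigma> i k =
     (let st = out_step \<sigma> k
      in edge_cost E (st i) (card {j \<in> {1..n}. st j = st i}))"

definition reaches :: "'v \<Rightarrow> 'v \<Rightarrow> (nat \<Rightarrow> 'v strategy) \<Rightarrow> nat \<Rightarrow> nat \<Rightarrow> bool" where
  "reaches src tgt \<sigma> i k \<longleftrightarrow> cur src (out_hist \<sigma> k) i = tgt"

definition cost :: "('v \<Rightarrow> 'v \<Rightarrow> (nat \<Rightarrow> nat) option) \<Rightarrow> 'v \<Rightarrow> 'v \<Rightarrow> nat \<Rightarrow> (nat \<Rightarrow> 'v strategy) \<Rightarrow> nat \<Rightarrow> enat" where
  "cost E src tgt n \<sigma> i =
     (if \<exists>k. reaches src tgt \<sigma> i k
      then enat (\<Sum>k < (LEAST k. reaches src tgt \<sigma> i k). payment E n \<sigma> i k)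
      else \<infinity>)"

definition nash_eq :: "('v \<Rightarrow> 'v \<Rightarrow> (nat \<Rightarrow> nat) option) \<Rightarrow> 'v \<Rightarrow> 'v \<Rightarrow> nat \<Rightarrow> (nat \<Rightarrow> 'v strategy) \<Rightarrow> bool" where
  "nash_eq E src tgt n \<sigma> \<longleftrightarrow>
     (\<forall>i\<in>{1..n}. strategy E src i (\<sigma> i)) \<and>
     (\<forall>k\<in>{1..n}. cost E src tgt n \<sigma> k =
        (INF s' \<in> {s. strategy E src k s}. cost E src tgt n (\<sigma>(k := s')) k))"

definition blind_nash_eq :: "('v \<Rightarrow> 'v \<Rightarrow> (nat \<Rightarrow> nat) option) \<Rightarrow> 'v \<Rightarrow> 'v \<Rightarrow> nat \<Rightarrow> (nat \<Rightarrow> 'v strategy) \<Rightarrow> bool" where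
  "blind_nash_eq E src tgt n \<sigma> \<longleftrightarrow>
     (\<forall>i\<in>{1..n}. blind_strategy E src i (\<sigma> i)) \<and>
     (\<forall>k\<in>{1..n}. \<forall>s'. blind_strategy E src k s' \<longrightarrow>
        cost E src tgt n \<sigma> k \<le> cost E src tgt n (\<sigma>(k := s')) k)"

end

theory Submission
  imports Defs
begin

lemma length_out_hist[simp]: "length (out_hist \<sigma> m) = m"
  by (induction m) auto

lemma last_visited: "last (visited src h i) = cur src h i"
  by (simp add: visited_def cur_def last_map)

lemma blindify:
  assumes st: "strategy E src k s'"
    and ex: "\<And>v. \<exists>e. is_edge E e \<and> fst e = v"
  shows "\<exists>s''. blind_strategy E src k s'' \<and>
           (\<forall>m. out_hist (\<sigma>(k := s'')) m = out_hist (\<sigma>(k := s')) m \<and>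
                out_step (\<sigma>(k := s'')) m = out_step (\<sigma>(k := s')) m)"
proof -
  define H where "H = out_hist (\<sigma>(k := s'))"
  define s'' where "s'' = (\<lambda>h. if visited src h k = visited src (H (length h)) k
       then s' (H (length h)) else (SOME e. is_edge E e \<and> fst e = last (visited src h k)))"
  have bl: "blind src k s''"
    unfolding blind_def
  proof (intro allI impI)
    fix h h' assume eq: "visited src h k = visited src h' k"
    then have "length h = length h'"
      using eq unfolding visited_def by (metis length_map list.inject)
    then show "s'' h = s'' h'" unfolding s''_def using eq by simp
  qed
  have stg: "strategy E src k s''"
    unfolding strategy_def
  proof
    fix h
    show "is_edge E (s'' h) \<and> fst (s'' h) = cur src h k"
    proof (cases "visited src h k = visited src (H (length h)) k")
      case True
      then have "cur src h k = cur src (H (length h)) k"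
        by (metis last_visited)
      then show ?thesis using True st unfolding s''_def strategy_def by simp
    next
      case False
      have exx: "\<exists>e. is_edge E e \<and> fst e = last (visited src h k)" using ex by blast
      then have "is_edge E (s'' h) \<and> fst (s'' h) = last (visited src h k)"
        unfolding s''_def using False someI_ex[OF exx] by simp
      then show ?thesis by (simp add: last_visited)
    qed
  qed
  have core: "(\<sigma>(k := s'')) i (H m) = (\<sigma>(k := s')) i (H m)" for i m
    by (simp add: s''_def H_def)
  have oh: "out_hist (\<sigma>(k := s'')) m = H m" for m
  proof (induction m)
    case 0 then show ?case by (simp add: H_def)
  next
    case (Suc m)
    then show ?case using core[of _ m] by (simp add: H_def)
  qed
  have os: "out_step (\<sigma>(k := s'')) m = out_step (\<sigma>(k := s')) m" for m
    unfolding out_step_def oh using core[of _ m] by (simp add: H_def)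
  show ?thesis
    using bl stg oh os by (auto simp: blind_strategy_def H_def)
qed

lemma cost_cong:
  assumes "\<And>m. out_hist \<tau> m = out_hist \<tau>' m" "\<And>m. out_step \<tau> m = out_step \<tau>' m"
  shows "cost E src tgt n \<tau> k = cost E src tgt n \<tau>' k"
  unfolding cost_def reaches_def payment_def assms by simp

theorem mainTheorem3:
  fixes V :: "'v set" and E :: "'v \<Rightarrow> 'v \<Rightarrow> (nat \<Rightarrow> nat) option"
    and src tgt :: 'v and n :: nat and \<sigma> :: "nat \<Rightarrow> 'v strategy"
  assumes "arena V E src tgt"
    and "blind_nash_eq E src tgt n \<sigma>"
  shows "nash_eq E src tgt n \<sigma>"
proof -
  have bs: "\<And>i. i \<in> {1..n} \<Longrightarrow> blind_strategy E src i (\<sigma> i)"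
    and ne: "\<And>k s'. k \<in> {1..n} \<Longrightarrow> blind_strategy E src k s' \<Longrightarrow>
        cost E src tgt n \<sigma> k \<le> cost E src tgt n (\<sigma>(k := s')) k"
    using assms(2) unfolding blind_nash_eq_def by auto
  have sts: "\<And>i. i \<in> {1..n} \<Longrightarrow> strategy E src i (\<sigma> i)"
    using bs by (simp add: blind_strategy_def)
  have "cost E src tgt n \<sigma> k =
        (INF s' \<in> {s. strategy E src k s}. cost E src tgt n (\<sigma>(k := s')) k)"
    if k: "k \<in> {1..n}" for k
  proof (rule antisym)
    have ex: "\<exists>e. is_edge E e \<and> fst e = v" for v
    proof -
      let ?h = "[\<lambda>_. (v, v)] :: 'v history"
      have "is_edge E (\<sigma> k ?h) \<and> fst (\<sigma> k ?h) = cur src ?h k"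
        using sts[OF k] unfolding strategy_def by blast
      then show ?thesis by (metis cur_def last_ConsL list.distinct(1) snd_conv)
    qed
    show "cost E src tgt n \<sigma> k \<le>
        (INF s' \<in> {s. strategy E src k s}. cost E src tgt n (\<sigma>(k := s')) k)"
    proof (rule INF_greatest)
      fix s' assume s'st: "s' \<in> {s. strategy E src k s}"
      obtain s'' where b: "blind_strategy E src k s''" and
        eqs: "\<And>m. out_hist (\<sigma>(k := s'')) m = out_hist (\<sigma>(k := s')) m \<and>
                out_step (\<sigma>(k := s'')) m = out_step (\<sigma>(k := s')) m"
        using blindify[OF _ ex, where k=k and s'=s' and \<sigma>=\<sigma>] s'st by auto
      have "cost E src tgt n \<sigma> k \<le> cost E src tgt n (\<sigma>(k := s'')) k"
        using ne[OF k b] .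
      also have "\<dots> = cost E src tgt n (\<sigma>(k := s')) k"
        by (rule cost_cong) (use eqs in auto)
      finally show "cost E src tgt n \<sigma> k \<le> cost E src tgt n (\<sigma>(k := s')) k" .
    qed
    show "(INF s' \<in> {s. strategy E src k s}. cost E src tgt n (\<sigma>(k := s')) k)
        \<le> cost E src tgt n \<sigma> k"
      using INF_lower[of "\<sigma> k" "{s. strategy E src k s}" "\<lambda>s'. cost E src tgt n (\<sigma>(k := s')) k"]
        sts[OF k] by simp
  qed
  then show ?thesis unfolding nash_eq_def using sts by blast
qed

end
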